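(* Let $A\in\mathbb{R}^{n\times n}$ and $B\in\mathbb{R}^{n\times m}$ with $\rho(|A|)<1$, and let $T$ be a positive integer. Let $i,j\in\{1,\dots,n\}$, $i\neq j$, and $w\in\mathbb{R}$ be such that $\rho(|A|+|w|e_je_i^{\top})<1$. Then $$\log\det(\mathcal{W}_A)\le\sigma n\log\Big(\frac{\operatorname{tr}(\mathcal{W}_A)}{n^{1/\sigma}}\Big)\le\sigma n\log\Big(\frac{\operatorname{tr}(\mathcal{H}_{\mathcal{X}})}{n^{1/\sigma}}\Big),$$ with $\sigma=1$ if $\operatorname{tr}(\mathcal{W}_A)\le1$ and $\sigma=2$ if $\operatorname{tr}(\mathcal{W}_A)>1$; and, with $\tau=(1+\alpha\beta)\operatorname{tr}(\mathcal{H}_{\mathcal{X}})+\alpha^2\gamma\bar\gamma$, $$\log\det(\mathcal{W}_{A+we_je_i^{\top}})\le\sigma n\log\Big(\frac{\tau}{n^{1/\sigma}}\Big),$$ with $\sigma=1$ if $\tau\le1$ and $\sigma=2$ if $\tau>1$.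
   Context: $|\cdot|$ is taken entrywise; $\rho$ is the spectral radius; $e_k$ is the $k$-th canonical unit vector; $\|\cdot\|$ is the Euclidean norm. For $Z\in\mathbb{R}^{n\times n}$, $\mathcal{W}_Z=\sum_{t=0}^{T-1}Z^tBB^{\top}(Z^t)^{\top}$ (the paper assumes controllability, so Gramians are positive definite). Define $\mathcal{X}=(I-|A|)^{-1}$, $\mathcal{H}_{\mathcal{X}}=\mathcal{X}|B||B|^{\top}\mathcal{X}^{\top}$, $\alpha_{pq}=\frac{|w|}{1-|w|e_p^{\top}\mathcal{X}e_q}$, $\alpha=\max_{p\neq q}\alpha_{pq}$, $\beta=\max\{\max_{p\neq q}2e_p^{\top}\mathcal{X}e_q,\ \max_{p\neq q}e_p^{\top}\mathcal{X}e_q+\max_{q}\|\mathcal{X}e_q\|\}$, $\gamma=\max_k e_k^{\top}\mathcal{X}^{\top}\mathcal{X}e_k$, $\bar\gamma=\max_k e_k^{\top}\mathcal{X}|B||B|^{\top}\mathcal{X}^{\top}e_k$. *)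

theory Defs
  imports "HOL-Analysis.Analysis"
begin

primrec mpow :: "real^'n^'n \<Rightarrow> nat \<Rightarrow> real^'n^'n" where
  "mpow Z 0 = mat 1"
| "mpow Z (Suc t) = Z ** mpow Z t"

definition mabs :: "real^'c^'r \<Rightarrow> real^'c^'r" where
  "mabs M = (\<chi> r c. \<bar>M $ r $ c\<bar>)"

definition cmat :: "real^'n^'n \<Rightarrow> complex^'n^'n" where
  "cmat M = (\<chi> r c. complex_of_real (M $ r $ c))"

definition eigenvalues :: "real^'n^'n \<Rightarrow> complex set" where
  "eigenvalues M = {e. \<exists>v. v \<noteq> 0 \<and> cmat M *v v = e *s v}"

definition spectral_radius :: "real^'n^'n \<Rightarrow> real" where
  "spectral_radius M = Sup (cmod ` eigenvalues M)"

definition unitv :: "'n \<Rightarrow> real^'n" where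
  "unitv k = (\<chi> r. if r = k then 1 else 0)"

definition Eji :: "'n \<Rightarrow> 'n \<Rightarrow> real^'n^'n" where
  "Eji j i = (\<chi> r c. if r = j \<and> c = i then 1 else 0)"

definition gramian :: "nat \<Rightarrow> real^'n^'n \<Rightarrow> real^'m^'n \<Rightarrow> real^'n^'n" where
  "gramian T Z B = (\<Sum>t<T. mpow Z t ** B ** transpose B ** transpose (mpow Z t))"

(* Controllability of (Z,B) over horizon T: the columns of B, ZB, ..., Z^(T-1)B span R^n
   (i.e. the controllability matrix has full row rank n) *)
definition controllable :: "nat \<Rightarrow> real^'n^'n \<Rightarrow> real^'m^'n \<Rightarrow> bool" where
  "controllable T Z B \<longleftrightarrow> span {column k (mpow Z t ** B) | t k. t < T} = UNIV"

definition Xmat :: "real^'n^'n \<Rightarrow> real^'n^'n" where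
  "Xmat A = matrix_inv (mat 1 - mabs A)"

definition Hmat :: "real^'n^'n \<Rightarrow> real^'m^'n \<Rightarrow> real^'n^'n" where
  "Hmat A B = Xmat A ** mabs B ** transpose (mabs B) ** transpose (Xmat A)"

definition alpha_pq :: "real^'n^'n \<Rightarrow> real \<Rightarrow> 'n \<Rightarrow> 'n \<Rightarrow> real" where
  "alpha_pq A w p q = \<bar>w\<bar> / (1 - \<bar>w\<bar> * (unitv p \<bullet> (Xmat A *v unitv q)))"

definition alpha :: "real^'n^'n \<Rightarrow> real \<Rightarrow> real" where
  "alpha A w = Max {alpha_pq A w p q | p q. p \<noteq> q}"

definition beta :: "real^'n^'n \<Rightarrow> real" where
  "beta A = max (Max {2 * (unitv p \<bullet> (Xmat A *v unitv q)) | p q. p \<noteq> q})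
                (Max {unitv p \<bullet> (Xmat A *v unitv q) | p q. p \<noteq> q}
                 + Max {norm (Xmat A *v unitv q) | q. True})"

definition gamma :: "real^'n^'n \<Rightarrow> real" where
  "gamma A = Max {unitv k \<bullet> ((transpose (Xmat A) ** Xmat A) *v unitv k) | k. True}"

definition gamma_bar :: "real^'n^'n \<Rightarrow> real^'m^'n \<Rightarrow> real" where
  "gamma_bar A B = Max {unitv k \<bullet> (Hmat A B *v unitv k) | k. True}"

definition sigma :: "real \<Rightarrow> real" where
  "sigma x = (if x \<le> 1 then 1 else 2)"

end

theory Submission
  imports Defs
begin

lemma inv_props:
  fixes M :: "real^'n^'n"
  assumes "invertible M"
  shows "M ** matrix_inv M = mat 1" "matrix_inv M ** M = mat 1"
  using someI_ex[OF assms[unfolded invertible_def]] unfolding matrix_inv_def by auto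

lemma inv_unique:
  fixes M Z :: "real^'n^'n"
  assumes "M ** Z = mat 1"
  shows "matrix_inv M = Z"
proof -
  have inv: "invertible M" using assms invertible_right_inverse by blast
  have "matrix_inv M = matrix_inv M ** (M ** Z)" using assms by simp
  also have "... = (matrix_inv M ** M) ** Z" by (simp add: matrix_mul_assoc)
  also have "... = Z" using inv_props(2)[OF inv] by simp
  finally show ?thesis .
qed

lemma invertible_of_ker:
  fixes M :: "real^'n^'n"
  assumes "\<And>x. M *v x = 0 \<Longrightarrow> x = 0"
  shows "invertible M"
  using assms matrix_left_invertible_ker invertible_left_inverse by blast

lemma ev_bound:
  fixes M :: "real^'n^'n"
  assumes "e \<in> eigenvalues M"
  shows "cmod e \<le> (\<Sum>r\<in>UNIV. \<Sum>c\<in>UNIV. \<bar>M$r$c\<bar>)"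
proof -
  obtain v where v: "v \<noteq> 0" "cmat M *v v = e *s v"
    using assms unfolding eigenvalues_def by auto
  define m where "m = Max (range (\<lambda>j. cmod (v$j)))"
  have fin: "finite (range (\<lambda>j. cmod (v$j)))" by simp
  have mge: "cmod (v$j) \<le> m" for j unfolding m_def using fin by (intro Max_ge) auto
  obtain k where k: "cmod (v$k) = m" unfolding m_def using Max_in[OF fin] by fastforce
  obtain j where j: "v$j \<noteq> 0" using v(1) by (metis vec_eq_iff zero_index)
  have mpos: "m > 0" using mge[of j] j by (smt (verit) zero_less_norm_iff)
  have "e * v$k = (cmat M *v v)$k" using v(2) by simp
  also have "... = (\<Sum>c\<in>UNIV. complex_of_real (M$k$c) * v$c)"
    by (simp add: matrix_vector_mult_def cmat_def)
  finally have eq: "e * v$k = (\<Sum>c\<in>UNIV. complex_of_real (M$k$c) * v$c)" .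
  have "cmod e * m = cmod (e * v$k)" using k by (simp add: norm_mult)
  also have "... \<le> (\<Sum>c\<in>UNIV. cmod (complex_of_real (M$k$c) * v$c))"
    unfolding eq by (rule norm_sum)
  also have "... \<le> (\<Sum>c\<in>UNIV. \<bar>M$k$c\<bar> * m)"
    by (intro sum_mono) (simp add: norm_mult mge mult_left_mono)
  finally have "cmod e * m \<le> (\<Sum>c\<in>UNIV. \<bar>M$k$c\<bar>) * m" by (simp add: sum_distrib_right)
  hence "cmod e \<le> (\<Sum>c\<in>UNIV. \<bar>M$k$c\<bar>)" using mpos by simp
  also have "... \<le> (\<Sum>r\<in>UNIV. \<Sum>c\<in>UNIV. \<bar>M$r$c\<bar>)"
    by (rule member_le_sum) (auto intro: sum_nonneg)
  finally show ?thesis .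
qed

lemma ev_le_rho:
  fixes M :: "real^'n^'n"
  assumes "e \<in> eigenvalues M"
  shows "cmod e \<le> spectral_radius M"
  unfolding spectral_radius_def
  by (rule cSup_upper) (use assms ev_bound in \<open>auto intro!: bdd_aboveI2\<close>)

lemma real_ev:
  fixes M :: "real^'n^'n"
  assumes "v \<noteq> 0" "M *v v = l *\<^sub>R v"
  shows "complex_of_real l \<in> eigenvalues M"
proof -
  define cv where "cv = (\<chi> i. complex_of_real (v$i))"
  have "cv \<noteq> 0" using assms(1) unfolding cv_def by (simp add: vec_eq_iff)
  moreover have "cmat M *v cv = complex_of_real l *s cv"
  proof -
    have "(cmat M *v cv)$r = complex_of_real l * cv$r" for r
    proof -
      have "(cmat M *v cv)$r = complex_of_real ((M *v v)$r)"
        by (simp add: matrix_vector_mult_def cmat_def cv_def)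
      also have "... = complex_of_real l * cv$r" using assms(2) by (simp add: cv_def)
      finally show ?thesis .
    qed
    thus ?thesis by (simp add: vec_eq_iff)
  qed
  ultimately show ?thesis unfolding eigenvalues_def by auto
qed

lemma inv_s:
  fixes N :: "real^'n^'n"
  assumes rho: "spectral_radius N < 1" and s: "0 \<le> s" "s \<le> 1"
  shows "invertible (mat 1 - s *\<^sub>R N)"
proof (rule invertible_of_ker, rule ccontr)
  fix x assume x: "(mat 1 - s *\<^sub>R N) *v x = 0" "x \<noteq> 0"
  have xe: "x = s *\<^sub>R (N *v x)" using x(1)
    by (simp add: matrix_vector_mult_diff_rdistrib scaleR_matrix_vector_assoc)
  have "s \<noteq> 0" using xe x(2) by auto
  hence "N *v x = (1/s) *\<^sub>R x" using xe by (metis divide_inverse_commute eq_vector_fraction_iff scaleR_scaleR mult_1)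
  from real_ev[OF x(2) this] have "cmod (complex_of_real (1/s)) \<le> spectral_radius N"
    by (rule ev_le_rho)
  moreover have "cmod (complex_of_real (1/s)) \<ge> 1"
  proof -
    have "cmod (complex_of_real (1/s)) = 1/s" using s by (simp only: norm_of_real) simp
    thus ?thesis using s \<open>s \<noteq> 0\<close> by simp
  qed
  ultimately show False using rho by simp
qed

lemma mm_entry: "((A::real^'n^'m) ** B) $ i $ j = (\<Sum>k\<in>UNIV. A$i$k * B$k$j)"
  by (simp add: matrix_matrix_mult_def)
lemma mm_diff_l: "(A::real^'n^'m) ** (B - C) = A ** B - A ** C"
  by (simp add: matrix_matrix_mult_def vec_eq_iff sum_subtractf algebra_simps)
lemma mm_diff_r: "((B::real^'n^'m) - C) ** A = B ** A - C ** A"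
  by (simp add: matrix_matrix_mult_def vec_eq_iff sum_subtractf algebra_simps)
lemma mm_add_r: "((B::real^'n^'m) + C) ** A = B ** A + C ** A"
  by (simp add: matrix_matrix_mult_def vec_eq_iff sum.distrib algebra_simps)
lemma mm_scale_l: "(k *\<^sub>R (A::real^'n^'m)) ** B = k *\<^sub>R (A ** B)"
  by (simp add: matrix_matrix_mult_def vec_eq_iff sum_distrib_left algebra_simps)
lemma mm_scale_r: "(A::real^'n^'m) ** (k *\<^sub>R B) = k *\<^sub>R (A ** B)"
  by (simp add: matrix_matrix_mult_def vec_eq_iff sum_distrib_left algebra_simps)

lemma det_cont:
  fixes f :: "real \<Rightarrow> real^'n^'n"
  assumes "\<And>i j. continuous_on S (\<lambda>s. f s $ i $ j)"
  shows "continuous_on S (\<lambda>s. det (f s))"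
  unfolding det_def by (intro continuous_intros assms)

lemma cont_if: "continuous_on S f \<Longrightarrow> continuous_on S g \<Longrightarrow> continuous_on S (\<lambda>x. if b then f x else g x)"
  by (cases b) auto

lemma resolvent_bounded:
  fixes N :: "real^'n^'n"
  assumes rho: "spectral_radius N < 1"
  shows "\<exists>C. \<forall>s\<in>{0..1}. \<forall>r c. \<bar>matrix_inv (mat 1 - s *\<^sub>R N) $ r $ c\<bar> \<le> C"
proof -
  define M where "M s = (mat 1 - s *\<^sub>R N)" for s :: real
  define D where "D s = det (M s)" for s
  define E where "E s r c = det (\<chi> i j. if j = r then (if i = c then 1 else 0) else M s $ i $ j) / D s" for s r c
  have Mc: "continuous_on {0..1} (\<lambda>s. M s $ i $ j)" for i j
    unfolding M_def by (auto simp: mat_def intro!: continuous_intros)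
  have Dnz: "D s \<noteq> 0" if "s \<in> {0..1}" for s
    using inv_s[OF rho, of s] that invertible_det_nz unfolding D_def M_def by auto
  have Ec: "continuous_on {0..1} (\<lambda>s. E s r c)" for r c
    unfolding E_def
    apply (rule continuous_on_divide)
    subgoal by (rule det_cont) (simp add: cont_if Mc)
    subgoal unfolding D_def by (rule det_cont) (rule Mc)
    using Dnz by auto
  have Req: "matrix_inv (M s) $ r $ c = E s r c" if "s \<in> {0..1}" for s r c
  proof -
    have inv: "invertible (M s)" using inv_s[OF rho, of s] that unfolding M_def by auto
    define b :: "real^'n" where "b = (\<chi> i. if i = c then 1 else 0)"
    have "M s *v (matrix_inv (M s) *v b) = b"
      using inv_props(1)[OF inv] by (simp add: matrix_vector_mul_assoc)
    hence "matrix_inv (M s) *v b = (\<chi> k. det(\<chi> i j. if j=k then b$i else M s$i$j) / det (M s))"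
      using cramer[of "M s"] Dnz[OF that] unfolding D_def by blast
    hence "(matrix_inv (M s) *v b) $ r = det(\<chi> i j. if j=r then b$i else M s$i$j) / det (M s)"
      by simp
    moreover have "(matrix_inv (M s) *v b) $ r = matrix_inv (M s) $ r $ c"
      unfolding b_def by (simp add: matrix_vector_mult_def if_distrib cong: if_cong)
    moreover have "(\<chi> i j. if j = r then b$i else M s$i$j) = (\<chi> i j. if j = r then (if i = c then 1 else 0) else M s$i$j)"
      by (simp add: b_def vec_eq_iff)
    ultimately show ?thesis unfolding E_def D_def by simp
  qed
  have "\<exists>B. \<forall>s\<in>{0..1}. \<bar>E s r c\<bar> \<le> B" for r c
  proof -
    have "compact ((\<lambda>s. E s r c) ` {0..1})"
      by (rule compact_continuous_image[OF Ec]) simp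
    hence "bounded ((\<lambda>s. E s r c) ` {0..1})" by (rule compact_imp_bounded)
    then show ?thesis unfolding bounded_iff by auto
  qed
  then obtain B where B: "\<And>r c. \<forall>s\<in>{0..1}. \<bar>E s r c\<bar> \<le> B r c" by metis
  define C where "C = (\<Sum>r\<in>UNIV. \<Sum>c\<in>UNIV. \<bar>B r c\<bar>)"
  have "\<bar>B r c\<bar> \<le> C" for r c
  proof -
    have "\<bar>B r c\<bar> \<le> (\<Sum>c\<in>UNIV. \<bar>B r c\<bar>)" by (rule member_le_sum) auto
    also have "... \<le> C" unfolding C_def by (rule member_le_sum) (auto intro: sum_nonneg)
    finally show ?thesis .
  qed
  hence "\<forall>s\<in>{0..1}. \<forall>r c. \<bar>matrix_inv (M s) $ r $ c\<bar> \<le> C"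
    using B Req by (metis abs_ge_self order_trans)
  thus ?thesis unfolding M_def by blast
qed

lemma resolvent_identity:
  fixes N :: "real^'n^'n"
  assumes "invertible (mat 1 - s *\<^sub>R N)" "invertible (mat 1 - t *\<^sub>R N)"
  shows "matrix_inv (mat 1 - t *\<^sub>R N) = matrix_inv (mat 1 - s *\<^sub>R N)
     + (t - s) *\<^sub>R (matrix_inv (mat 1 - s *\<^sub>R N) ** N ** matrix_inv (mat 1 - t *\<^sub>R N))"
proof -
  let ?Rs = "matrix_inv (mat 1 - s *\<^sub>R N)" and ?Rt = "matrix_inv (mat 1 - t *\<^sub>R N)"
  have "?Rs ** ((mat 1 - s *\<^sub>R N) - (mat 1 - t *\<^sub>R N)) ** ?Rt
      = ?Rs ** (mat 1 - s *\<^sub>R N) ** ?Rt - ?Rs ** ((mat 1 - t *\<^sub>R N) ** ?Rt)"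
    by (simp add: mm_diff_l mm_diff_r matrix_mul_assoc)
  also have "... = ?Rt - ?Rs" using inv_props[OF assms(1)] inv_props[OF assms(2)] by simp
  finally have e1: "?Rs ** ((mat 1 - s *\<^sub>R N) - (mat 1 - t *\<^sub>R N)) ** ?Rt = ?Rt - ?Rs" .
  have "(mat 1 - s *\<^sub>R N) - (mat 1 - t *\<^sub>R N) = (t - s) *\<^sub>R N"
    by (simp add: algebra_simps)
  hence "?Rs ** ((mat 1 - s *\<^sub>R N) - (mat 1 - t *\<^sub>R N)) ** ?Rt = (t - s) *\<^sub>R (?Rs ** N ** ?Rt)"
    by (simp add: mm_scale_l mm_scale_r)
  with e1 have "?Rt - ?Rs = (t - s) *\<^sub>R (?Rs ** N ** ?Rt)" by simp
  thus ?thesis by (metis diff_add_cancel add.commute)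
qed

lemma min_step:
  fixes Z P Y :: "real^'n^'n"
  assumes Z: "Z = Y + h *\<^sub>R (P ** Z)" and Y: "\<And>r c. Y$r$c \<ge> 0"
    and P: "\<And>r c. 0 \<le> P$r$c" "\<And>r c. P$r$c \<le> k"
    and h: "h \<ge> 0" "h * real CARD('n) * k < 1"
  shows "Z$r$c \<ge> 0"
proof (rule ccontr)
  assume neg: "\<not> Z$r$c \<ge> 0"
  define m where "m = Min (range (\<lambda>(r,c). Z$r$c))"
  have fin: "finite (range (\<lambda>(r,c). Z$r$c))" by simp
  have mle: "m \<le> Z$a$b" for a b unfolding m_def using fin by (intro Min_le) auto
  obtain a b where ab: "Z$a$b = m" unfolding m_def using Min_in[OF fin] by fastforce
  have mneg: "m < 0" using mle[of r c] neg by simp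
  have kpos: "k \<ge> 0" using P(1)[of a a] P(2)[of a a] by simp
  have "Z$a$b = Y$a$b + h * (\<Sum>j\<in>UNIV. P$a$j * Z$j$b)"
    using arg_cong[OF Z, of "\<lambda>M. M$a$b"] by (simp add: mm_entry)
  also have "... \<ge> 0 + h * (\<Sum>j\<in>(UNIV::'n set). k * m)"
  proof -
    have pj: "P$a$j * Z$j$b \<ge> k * m" for j
    proof -
      have "P$a$j * Z$j$b \<ge> P$a$j * m" using mle P(1) by (simp add: mult_left_mono)
      moreover have "P$a$j * m \<ge> k * m" using P(2)[of a j] mneg by (simp add: mult_right_mono_neg)
      ultimately show ?thesis by simp
    qed
    have "(\<Sum>j\<in>UNIV. P$a$j * Z$j$b) \<ge> (\<Sum>j\<in>(UNIV::'n set). k * m)" by (rule sum_mono) (rule pj)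
    thus ?thesis using Y[of a b] h(1) by (smt (verit) mult_left_mono)
  qed
  finally have "m \<ge> h * real CARD('n) * k * m" using ab by simp
  moreover have "h * real CARD('n) * k * m > m"
  proof -
    have "(1 - h * real CARD('n) * k) * m < 0" using h(2) mneg by (simp add: mult_pos_neg)
    thus ?thesis by (simp add: algebra_simps)
  qed
  ultimately show False by simp
qed

lemma mmatrix:
  fixes N :: "real^'n^'n"
  assumes nn: "\<And>r c. N$r$c \<ge> 0" and rho: "spectral_radius N < 1"
  shows "invertible (mat 1 - N)" "\<And>r c. matrix_inv (mat 1 - N) $ r $ c \<ge> 0"
proof -
  define R where "R s = matrix_inv (mat 1 - s *\<^sub>R N)" for s :: real
  obtain C where C: "\<And>s r c. s \<in> {0..1} \<Longrightarrow> \<bar>R s $ r $ c\<bar> \<le> C"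
    using resolvent_bounded[OF rho] unfolding R_def by blast
  have C0: "C \<ge> 0" using C[of 0] by (meson abs_ge_zero atLeastAtMost_iff order_trans zero_le_one order_refl)
  define nmax where "nmax = (\<Sum>r\<in>UNIV. \<Sum>c\<in>UNIV. N$r$c)"
  have Nle: "N$r$c \<le> nmax" for r c
  proof -
    have "N$r$c \<le> (\<Sum>c\<in>UNIV. N$r$c)" by (rule member_le_sum) (auto simp: nn)
    also have "... \<le> nmax" unfolding nmax_def by (rule member_le_sum) (auto intro: sum_nonneg nn)
    finally show ?thesis .
  qed
  have nmax0: "nmax \<ge> 0" unfolding nmax_def by (auto intro!: sum_nonneg nn)
  define k where "k = real CARD('n) * C * nmax"
  have k0: "k \<ge> 0" unfolding k_def using C0 nmax0 by simp
  have Pk: "(R s ** N) $ r $ c \<le> k" if "s \<in> {0..1}" for s r c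
  proof -
    have "(R s ** N) $ r $ c = (\<Sum>j\<in>UNIV. R s $ r $ j * N $ j $ c)" by (rule mm_entry)
    also have "... \<le> (\<Sum>j\<in>(UNIV::'n set). C * nmax)"
    proof (rule sum_mono)
      fix j
      have "R s $ r $ j * N $ j $ c \<le> \<bar>R s $ r $ j\<bar> * N $ j $ c" using nn by (simp add: mult_right_mono)
      also have "... \<le> C * nmax" using C[OF that] Nle nn C0 by (simp add: mult_mono)
      finally show "R s $ r $ j * N $ j $ c \<le> C * nmax" .
    qed
    also have "... = k" unfolding k_def by simp
    finally show ?thesis .
  qed
  define L :: nat where "L = nat \<lceil>real CARD('n) * k\<rceil> + 1"
  have Lpos: "L \<ge> 1" unfolding L_def by simp
  have Lgt: "real L > real CARD('n) * k" unfolding L_def by linarith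
  define h where "h = 1 / real L"
  have h0: "h \<ge> 0" unfolding h_def by simp
  have hk: "h * real CARD('n) * k < 1"
    unfolding h_def using Lgt Lpos by (simp add: field_simps)
  have ind: "\<forall>r c. R (real i / real L) $ r $ c \<ge> 0" if "i \<le> L" for i
    using that
  proof (induction i)
    case 0
    have "R 0 = mat 1" unfolding R_def by (simp add: inv_unique)
    thus ?case by (simp add: mat_def)
  next
    case (Suc i)
    define s where "s = real i / real L"
    define t where "t = real (Suc i) / real L"
    have s01: "s \<in> {0..1}" using Suc.prems Lpos unfolding s_def by auto
    have t01: "t \<in> {0..1}" using Suc.prems Lpos unfolding t_def by auto
    have ts: "t - s = h" unfolding t_def s_def h_def by (simp add: add_divide_distrib)
    have IH: "\<And>r c. R s $ r $ c \<ge> 0" using Suc.IH Suc.prems unfolding s_def by simp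
    have eq: "R t = R s + h *\<^sub>R (R s ** N ** R t)"
      using resolvent_identity[OF inv_s[OF rho] inv_s[OF rho], of s t] s01 t01 ts
      unfolding R_def by simp
    have Pnn: "(R s ** N) $ r $ c \<ge> 0" for r c
      unfolding mm_entry by (intro sum_nonneg) (simp add: IH nn)
    have "R t $ r $ c \<ge> 0" for r c
      by (rule min_step[OF eq IH Pnn Pk[OF s01] h0 hk])
    thus ?case unfolding t_def by blast
  qed
  have R1: "R 1 = matrix_inv (mat 1 - N)" unfolding R_def by simp
  show "invertible (mat 1 - N)" using inv_s[OF rho, of 1] by simp
  fix r c
  show "matrix_inv (mat 1 - N) $ r $ c \<ge> 0" using ind[OF order_refl] Lpos R1 by simp
qed

lemma mpow_nonneg:
  fixes N :: "real^'n^'n"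
  assumes "\<And>r c. N$r$c \<ge> 0"
  shows "mpow N t $ r $ c \<ge> 0"
proof (induction t arbitrary: r c)
  case 0 thus ?case by (simp add: mat_def)
next
  case (Suc t) thus ?case by (simp add: mm_entry assms sum_nonneg)
qed

lemma mm_abs_le:
  fixes A A' :: "real^'k^'m" and B B' :: "real^'n^'k"
  assumes "\<And>r c. \<bar>A$r$c\<bar> \<le> A'$r$c" "\<And>r c. \<bar>B$r$c\<bar> \<le> B'$r$c"
  shows "\<bar>(A ** B)$r$c\<bar> \<le> (A' ** B')$r$c"
proof -
  have "\<bar>(A ** B)$r$c\<bar> \<le> (\<Sum>j\<in>UNIV. \<bar>A$r$j * B$j$c\<bar>)" unfolding mm_entry by (rule sum_abs)
  also have "... \<le> (\<Sum>j\<in>UNIV. A'$r$j * B'$j$c)"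
    by (intro sum_mono) (simp add: abs_mult assms mult_mono')
  finally show ?thesis by (simp add: mm_entry)
qed

lemma mpow_abs_le:
  fixes Z P :: "real^'n^'n"
  assumes "\<And>r c. \<bar>Z$r$c\<bar> \<le> P$r$c"
  shows "\<bar>mpow Z t $ r $ c\<bar> \<le> mpow P t $ r $ c"
proof (induction t arbitrary: r c)
  case 0 thus ?case by (simp add: mat_def)
next
  case (Suc t) thus ?case by (simp add: mm_abs_le assms)
qed

lemma neumann_partial:
  fixes N :: "real^'n^'n"
  shows "(mat 1 - N) ** (\<Sum>t<T. mpow N t) = mat 1 - mpow N T"
proof (induction T)
  case 0 thus ?case by simp
next
  case (Suc T)
  have "(mat 1 - N) ** (\<Sum>t<Suc T. mpow N t) = (mat 1 - N) ** (\<Sum>t<T. mpow N t) + (mat 1 - N) ** mpow N T"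
    by (simp add: matrix_add_ldistrib)
  also have "... = mat 1 - mpow N (Suc T)" using Suc by (simp add: mm_diff_r)
  finally show ?case .
qed

lemma X_ge_partial:
  fixes N :: "real^'n^'n"
  assumes nn: "\<And>r c. N$r$c \<ge> 0" and rho: "spectral_radius N < 1"
  shows "(\<Sum>t<T. mpow N t) $ r $ c \<le> matrix_inv (mat 1 - N) $ r $ c"
proof -
  let ?X = "matrix_inv (mat 1 - N)"
  have inv: "invertible (mat 1 - N)" using mmatrix[OF nn rho] by simp
  have "(\<Sum>t<T. mpow N t) = ?X ** ((mat 1 - N) ** (\<Sum>t<T. mpow N t))"
    using inv_props(2)[OF inv] by (simp add: matrix_mul_assoc)
  also have "... = ?X - ?X ** mpow N T" by (simp add: neumann_partial mm_diff_l)
  finally have "(\<Sum>t<T. mpow N t) $ r $ c = ?X $ r $ c - (?X ** mpow N T) $ r $ c" by simp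
  moreover have "(?X ** mpow N T) $ r $ c \<ge> 0"
    unfolding mm_entry by (intro sum_nonneg mult_nonneg_nonneg mmatrix(2)[OF nn rho] mpow_nonneg nn)
  ultimately show ?thesis by simp
qed

lemma trace_MMt: "trace ((M::real^'k^'n) ** transpose M) = (\<Sum>r\<in>UNIV. \<Sum>c\<in>UNIV. (M$r$c)\<^sup>2)"
  unfolding trace_def mm_entry
  apply (rule sum.cong[OF refl])
  apply (rule sum.cong[OF refl])
  by (simp add: transpose_def power2_eq_square)

lemma trace_sum: "trace (\<Sum>t\<in>S. (f t :: real^'n^'n)) = (\<Sum>t\<in>S. trace (f t))"
  unfolding trace_def sum_component by (rule sum.swap)

lemma sum_sq_le_sq_sum:
  fixes f :: "nat \<Rightarrow> real"
  assumes "\<And>t. f t \<ge> 0"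
  shows "(\<Sum>t<T. (f t)\<^sup>2) \<le> (\<Sum>t<T. f t)\<^sup>2"
proof (induction T)
  case 0 thus ?case by simp
next
  case (Suc T)
  have s0: "(\<Sum>t<T. f t) \<ge> 0" by (intro sum_nonneg assms)
  have "(\<Sum>t<Suc T. (f t)\<^sup>2) = (\<Sum>t<T. (f t)\<^sup>2) + (f T)\<^sup>2" by simp
  also have "... \<le> (\<Sum>t<T. f t)\<^sup>2 + (f T)\<^sup>2" using Suc by simp
  also have "... \<le> ((\<Sum>t<T. f t) + f T)\<^sup>2" 
    using s0 assms[of T] by (simp add: power2_sum)
  finally show ?case by simp
qed

lemma gram_term: "mpow Z t ** B ** transpose B ** transpose (mpow Z t) = (mpow Z t ** B) ** transpose (mpow Z t ** B)"
  by (simp add: matrix_transpose_mul matrix_mul_assoc)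

lemma trace_gram_le:
  fixes Z P :: "real^'n^'n" and B :: "real^'m^'n"
  assumes le: "\<And>r c. \<bar>Z$r$c\<bar> \<le> P$r$c" and rho: "spectral_radius P < 1"
  shows "trace (gramian T Z B) \<le> trace (matrix_inv (mat 1 - P) ** mabs B ** transpose (mabs B) ** transpose (matrix_inv (mat 1 - P)))"
proof -
  let ?Y = "matrix_inv (mat 1 - P)"
  let ?bB = "mabs B"
  have nn: "P$r$c \<ge> 0" for r c using le[of r c] by simp
  have bB: "\<bar>B$r$c\<bar> \<le> ?bB$r$c" "?bB$r$c \<ge> 0" for r c by (simp_all add: mabs_def)
  have "trace (gramian T Z B) = (\<Sum>t<T. \<Sum>r\<in>UNIV. \<Sum>c\<in>UNIV. ((mpow Z t ** B)$r$c)\<^sup>2)"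
    unfolding gramian_def trace_sum gram_term trace_MMt ..
  also have "... = (\<Sum>r\<in>UNIV. \<Sum>c\<in>UNIV. \<Sum>t<T. ((mpow Z t ** B)$r$c)\<^sup>2)"
    by (subst sum.swap, rule sum.cong[OF refl], rule sum.swap)
  also have "... \<le> (\<Sum>r\<in>UNIV. \<Sum>c\<in>UNIV. ((?Y ** ?bB)$r$c)\<^sup>2)"
  proof (intro sum_mono)
    fix r c
    have a: "\<bar>(mpow Z t ** B)$r$c\<bar> \<le> (mpow P t ** ?bB)$r$c" for t
      by (rule mm_abs_le) (auto intro: mpow_abs_le le bB)
    have pnn: "(mpow P t ** ?bB)$r$c \<ge> 0" for t
      unfolding mm_entry by (intro sum_nonneg mult_nonneg_nonneg mpow_nonneg nn bB)
    have sq: "x\<^sup>2 \<le> y\<^sup>2" if "\<bar>x\<bar> \<le> y" for x y :: real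
    proof -
      have y0: "0 \<le> y" using that abs_ge_zero order_trans by blast
      have "\<bar>x\<bar> \<le> \<bar>y\<bar>" using that y0 by simp
      thus ?thesis by (simp add: abs_le_square_iff)
    qed
    have "(\<Sum>t<T. ((mpow Z t ** B)$r$c)\<^sup>2) \<le> (\<Sum>t<T. ((mpow P t ** ?bB)$r$c)\<^sup>2)"
      by (rule sum_mono) (rule sq[OF a])
    also have "... \<le> (\<Sum>t<T. (mpow P t ** ?bB)$r$c)\<^sup>2"
      by (rule sum_sq_le_sq_sum) (rule pnn)
    also have "(\<Sum>t<T. (mpow P t ** ?bB)$r$c) = ((\<Sum>t<T. mpow P t) ** ?bB)$r$c"
      by (simp add: mm_entry sum_component sum_distrib_right) (rule sum.swap)
    also have "(((\<Sum>t<T. mpow P t) ** ?bB)$r$c)\<^sup>2 \<le> ((?Y ** ?bB)$r$c)\<^sup>2"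
    proof (rule power_mono)
      show "((\<Sum>t<T. mpow P t) ** ?bB)$r$c \<le> (?Y ** ?bB)$r$c"
        unfolding mm_entry by (intro sum_mono mult_right_mono X_ge_partial nn rho bB)
      show "0 \<le> ((\<Sum>t<T. mpow P t) ** ?bB)$r$c"
        unfolding mm_entry sum_component by (intro sum_nonneg mult_nonneg_nonneg mpow_nonneg nn bB)
    qed
    finally show "(\<Sum>t<T. ((mpow Z t ** B)$r$c)\<^sup>2) \<le> ((?Y ** ?bB)$r$c)\<^sup>2" .
  qed
  also have "... = trace ((?Y ** ?bB) ** transpose (?Y ** ?bB))" by (rule trace_MMt[symmetric])
  also have "... = trace (?Y ** ?bB ** transpose ?bB ** transpose ?Y)"
    by (simp add: matrix_transpose_mul matrix_mul_assoc)
  finally show ?thesis .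
qed

lemma sym_dot:
  fixes W :: "real^'n^'n"
  assumes "transpose W = W"
  shows "x \<bullet> (W *v y) = (W *v x) \<bullet> y"
proof -
  have "x \<bullet> (W *v y) = (x v* W) \<bullet> y" by (rule dot_lmul_matrix[symmetric])
  also have "x v* W = transpose W *v x" by simp
  finally show ?thesis using assms by simp
qed

lemma quad_expand:
  fixes W :: "real^'n^'n"
  assumes "transpose W = W"
  shows "(u + t *\<^sub>R y) \<bullet> (W *v (u + t *\<^sub>R y)) = u \<bullet> (W *v u) + 2 * t * (y \<bullet> (W *v u)) + t\<^sup>2 * (y \<bullet> (W *v y))"
proof -
  have "u \<bullet> (W *v y) = y \<bullet> (W *v u)" using sym_dot[OF assms, of u y] by (simp add: inner_commute)
  thus ?thesis
    by (simp add: matrix_vector_right_distrib matrix_vector_mult_scaleR inner_add_left inner_add_right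
        power2_eq_square algebra_simps)
qed

lemma lin_quad_zero:
  fixes a d :: real
  assumes "\<And>t. 2 * t * a \<le> t\<^sup>2 * d"
  shows "a = 0"
proof (rule ccontr)
  assume a: "a \<noteq> 0"
  define t where "t = a / (\<bar>d\<bar> + 1)"
  have pos: "\<bar>d\<bar> + 1 > 0" by simp
  define c where "c = \<bar>d\<bar> + 1"
  have c0: "c > 0" unfolding c_def by simp
  have "2 * t * a \<le> t\<^sup>2 * d" by (rule assms)
  hence "(2 * t * a) * c\<^sup>2 \<le> (t\<^sup>2 * d) * c\<^sup>2" by (simp add: mult_right_mono)
  moreover have "(2 * t * a) * c\<^sup>2 = a * a * (2 * c)" "(t\<^sup>2 * d) * c\<^sup>2 = a * a * d"
    unfolding t_def c_def[symmetric] using c0 by (simp_all add: power2_eq_square field_simps)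
  ultimately have le: "a * a * (2 * c) \<le> a * a * d" by simp
  moreover have "a * a > 0" using a by (auto simp: zero_less_mult_iff)
  ultimately have "2 * c \<le> d" using mult_le_cancel_left_pos by blast
  hence "2 * (\<bar>d\<bar> + 1) \<le> d" unfolding c_def .
  thus False by simp
qed

definition oe_set :: "real^'n^'n \<Rightarrow> (real^'n) set \<Rightarrow> bool" where
  "oe_set W S \<longleftrightarrow> finite S \<and> (\<forall>u\<in>S. \<forall>v\<in>S. u \<noteq> v \<longrightarrow> u \<bullet> v = 0) \<and>
     (\<forall>u\<in>S. norm u = 1 \<and> (\<exists>l. W *v u = l *\<^sub>R u))"

lemma oe_extend:
  fixes W :: "real^'n^'n"
  assumes sym: "transpose W = W" and S: "oe_set W S" and card: "card S < CARD('n)"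
  shows "\<exists>S'. oe_set W S' \<and> card S' = Suc (card S)"
proof -
  have finS: "finite S" using S unfolding oe_set_def by simp
  have "dim S < DIM(real^'n)"
    using real_vector.dim_le_card'[OF finS] card by simp
  then obtain x :: "real^'n" where x: "x \<noteq> 0" "\<And>y. y \<in> span S \<Longrightarrow> orthogonal x y"
    using orthogonal_to_subspace_exists by blast
  define V where "V = {z::real^'n. \<forall>s\<in>S. s \<bullet> z = 0}"
  define K where "K = V \<inter> sphere 0 1"
  have closedV: "closed V"
  proof -
    have "V = (\<Inter>s\<in>S. {z. s \<bullet> z = 0})" unfolding V_def by auto
    thus ?thesis by (auto intro!: closed_INT closed_hyperplane)
  qed
  have compK: "compact K" unfolding K_def
    using closedV by (simp add: compact_Int_closed compact_sphere Int_commute closed_Int_compact)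
  have xV: "x \<in> V" unfolding V_def using x(2) by (simp add: orthogonal_def span_base inner_commute)
  have subV: "subspace V" unfolding V_def by (auto simp: subspace_def inner_add_right)
  have "(1 / norm x) *\<^sub>R x \<in> K" unfolding K_def using x(1) xV subspace_scale[OF subV xV] by simp
  hence Kne: "K \<noteq> {}" by blast
  have contf: "continuous_on K (\<lambda>z. z \<bullet> (W *v z))"
    by (intro continuous_intros)
  obtain u where uK: "u \<in> K" and umax: "\<And>y. y \<in> K \<Longrightarrow> y \<bullet> (W *v y) \<le> u \<bullet> (W *v u)"
    using continuous_attains_sup[OF compK Kne contf] by blast
  define lam where "lam = u \<bullet> (W *v u)"
  have uV: "u \<in> V" and un: "norm u = 1" using uK unfolding K_def by auto
  have uu: "u \<bullet> u = 1" using un by (simp add: norm_eq_1)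
  have maxV: "w \<bullet> (W *v w) \<le> lam * (w \<bullet> w)" if "w \<in> V" for w
  proof (cases "w = 0")
    case True thus ?thesis by simp
  next
    case False
    have "(1 / norm w) *\<^sub>R w \<in> K" unfolding K_def using False subspace_scale[OF subV that] by simp
    hence "((1 / norm w) *\<^sub>R w) \<bullet> (W *v ((1 / norm w) *\<^sub>R w)) \<le> lam" using umax lam_def by blast
    hence "(w \<bullet> (W *v w)) / (norm w)\<^sup>2 \<le> lam"
      by (simp add: matrix_vector_mult_scaleR power2_eq_square)
    moreover have "(norm w)\<^sup>2 > 0" using False by simp
    ultimately show ?thesis by (simp add: power2_norm_eq_inner divide_le_eq mult.commute)
  qed
  have perp: "y \<bullet> (W *v u) = 0" if yV: "y \<in> V" and yu: "y \<bullet> u = 0" for y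
  proof (rule lin_quad_zero)
    fix t
    have "u + t *\<^sub>R y \<in> V" using subV uV yV by (simp add: subspace_add subspace_scale)
    from maxV[OF this]
    have h1: "lam + 2 * t * (y \<bullet> (W *v u)) + t\<^sup>2 * (y \<bullet> (W *v y)) \<le> lam * ((u + t *\<^sub>R y) \<bullet> (u + t *\<^sub>R y))"
      unfolding quad_expand[OF sym] lam_def[symmetric] .
    have e2: "(u + t *\<^sub>R y) \<bullet> (u + t *\<^sub>R y) = 1 + t\<^sup>2 * (y \<bullet> y)"
      using uu yu by (simp add: inner_add_left inner_add_right inner_commute power2_eq_square)
    have h2: "lam * ((u + t *\<^sub>R y) \<bullet> (u + t *\<^sub>R y)) = lam + t\<^sup>2 * (lam * (y \<bullet> y))"
      unfolding e2 by (simp add: algebra_simps)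
    have e3: "t\<^sup>2 * (lam * (y \<bullet> y) - y \<bullet> (W *v y)) = t\<^sup>2 * (lam * (y \<bullet> y)) - t\<^sup>2 * (y \<bullet> (W *v y))"
      by (simp add: right_diff_distrib)
    show "2 * t * (y \<bullet> (W *v u)) \<le> t\<^sup>2 * (lam * (y \<bullet> y) - y \<bullet> (W *v y))"
      using h1 h2 e3 by linarith
  qed
  define z where "z = W *v u - lam *\<^sub>R u"
  have zV: "z \<in> V" unfolding V_def
  proof (intro CollectI ballI)
    fix s assume sS: "s \<in> S"
    obtain l where l: "W *v s = l *\<^sub>R s" using S sS unfolding oe_set_def by blast
    have su: "s \<bullet> u = 0" using uV sS unfolding V_def by blast
    have "s \<bullet> (W *v u) = (W *v s) \<bullet> u" by (rule sym_dot[OF sym])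
    also have "... = 0" using l su by simp
    finally show "s \<bullet> z = 0" unfolding z_def using su by (simp add: inner_diff_right)
  qed
  have zu: "z \<bullet> u = 0"
  proof -
    have "z \<bullet> u = (W *v u) \<bullet> u - lam * (u \<bullet> u)" unfolding z_def by (simp add: inner_diff_left)
    also have "... = 0" using uu unfolding lam_def by (simp add: inner_commute)
    finally show ?thesis .
  qed
  have "z \<bullet> z = z \<bullet> (W *v u) - lam * (z \<bullet> u)" unfolding z_def
    by (simp add: inner_diff_right)
  also have "... = 0" using perp[OF zV zu] zu by simp
  finally have "z = 0" by simp
  hence eig: "W *v u = lam *\<^sub>R u" unfolding z_def by simp
  have uS: "u \<notin> S"
  proof
    assume "u \<in> S"
    hence "u \<bullet> u = 0" using uV unfolding V_def by blast
    thus False using uu by simp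
  qed
  define S' where "S' = insert u S"
  have "oe_set W S'"
  proof -
    have f: "finite S'" using finS unfolding S'_def by simp
    have o: "\<forall>a\<in>S'. \<forall>b\<in>S'. a \<noteq> b \<longrightarrow> a \<bullet> b = 0"
    proof (intro ballI impI)
      fix a b assume a: "a \<in> S'" and b: "b \<in> S'" and ab: "a \<noteq> b"
      { assume "a = u" "b \<in> S" hence "a \<bullet> b = 0" using uV unfolding V_def by (simp add: inner_commute) }
      moreover
      { assume "b = u" "a \<in> S" hence "a \<bullet> b = 0" using uV unfolding V_def by simp }
      moreover
      { assume "a \<in> S" "b \<in> S" hence "a \<bullet> b = 0" using S ab unfolding oe_set_def by blast }
      ultimately show "a \<bullet> b = 0" using a b ab unfolding S'_def by blast
    qed
    have e: "\<forall>a\<in>S'. norm a = 1 \<and> (\<exists>l. W *v a = l *\<^sub>R a)"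
      using un eig S unfolding oe_set_def S'_def by auto
    show ?thesis unfolding oe_set_def using f o e by blast
  qed
  moreover have "card S' = Suc (card S)" unfolding S'_def using finS uS by simp
  ultimately show ?thesis by blast
qed

lemma oe_full:
  fixes W :: "real^'n^'n"
  assumes sym: "transpose W = W"
  shows "\<exists>S. oe_set W S \<and> card S = CARD('n)"
proof -
  have "\<exists>S. oe_set W S \<and> card S = k" if "k \<le> CARD('n)" for k
    using that
  proof (induction k)
    case 0
    have "oe_set W {}" unfolding oe_set_def by simp
    thus ?case by (intro exI[of _ "{}"]) simp
  next
    case (Suc k)
    then obtain S where "oe_set W S" "card S = k" by auto
    thus ?case using oe_extend[OF sym, of S] Suc.prems by auto
  qed
  thus ?thesis by simp
qed

lemma ln_sum_le:
  fixes l :: "'n::finite \<Rightarrow> real"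
  assumes pos: "\<And>j. l j > 0"
  shows "(\<Sum>j\<in>UNIV. ln (l j)) \<le> real CARD('n) * ln ((\<Sum>j\<in>UNIV. l j) / real CARD('n))"
proof -
  define n where "n = real CARD('n)"
  have n0: "n > 0" unfolding n_def by simp
  define a where "a = (\<Sum>j\<in>UNIV. l j) / n"
  have "(\<Sum>j\<in>UNIV. l j) > 0" by (rule sum_pos) (auto simp: pos)
  hence a0: "a > 0" unfolding a_def using n0 by simp
  have "ln (l j) - ln a \<le> l j / a - 1" for j
  proof -
    have "ln (l j) - ln a = ln (l j / a)" using pos[of j] a0 by (simp add: ln_div)
    also have "... \<le> l j / a - 1" by (rule ln_le_minus_one) (simp add: pos a0)
    finally show ?thesis .
  qed
  hence "(\<Sum>j\<in>UNIV. ln (l j) - ln a) \<le> (\<Sum>j\<in>(UNIV::'n set). l j / a - 1)" by (rule sum_mono)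
  also have "... = (\<Sum>j\<in>UNIV. l j) / a - n" unfolding n_def by (simp add: sum_subtractf sum_divide_distrib)
  also have "... = 0" unfolding a_def using n0 a0 a_def by (simp add: field_simps)
  finally have "(\<Sum>j\<in>UNIV. ln (l j)) - n * ln a \<le> 0" unfolding n_def by (simp add: sum_subtractf)
  thus ?thesis unfolding a_def n_def by simp
qed

lemma det_trace_ln:
  fixes W :: "real^'n^'n"
  assumes sym: "transpose W = W" and pd: "\<And>x. x \<noteq> 0 \<Longrightarrow> x \<bullet> (W *v x) > 0"
  shows "det W > 0" "ln (det W) \<le> real CARD('n) * ln (trace W / real CARD('n))"
proof -
  obtain S where S: "oe_set W S" "card S = CARD('n)" using oe_full[OF sym] by blast
  have finS: "finite S" using S unfolding oe_set_def by simp
  obtain f where f: "bij_betw f (UNIV::'n set) S"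
    using finite_same_card_bij[of "UNIV::'n set" S] finS S(2) by auto
  have fS: "f j \<in> S" for j using f by (auto simp: bij_betw_def)
  have finj: "f i = f j \<Longrightarrow> i = j" for i j using f by (auto simp: bij_betw_def inj_on_def)
  have fnorm: "f j \<bullet> f j = 1" for j using S fS[of j] unfolding oe_set_def by (simp add: norm_eq_1)
  have forth: "i \<noteq> j \<Longrightarrow> f i \<bullet> f j = 0" for i j using S fS[of i] fS[of j] finj unfolding oe_set_def by blast
  have "\<forall>j. \<exists>l. W *v f j = l *\<^sub>R f j" using S fS unfolding oe_set_def by blast
  then obtain l where l: "\<And>j. W *v f j = l j *\<^sub>R f j" by metis
  have fij: "f i \<bullet> f j = (if i = j then 1 else 0)" for i j using fnorm forth by simp
  define Q :: "real^'n^'n" where "Q = (\<chi> i j. f j $ i)"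
  have QtQ: "transpose Q ** Q = mat 1"
  proof -
    have "(transpose Q ** Q) $ i $ j = (mat 1 :: real^'n^'n) $ i $ j" for i j
    proof -
      have "(transpose Q ** Q) $ i $ j = f i \<bullet> f j"
        by (simp add: mm_entry Q_def transpose_def inner_vec_def)
      thus ?thesis by (simp add: fij mat_def)
    qed
    thus ?thesis by (simp add: vec_eq_iff)
  qed
  hence QQt: "Q ** transpose Q = mat 1" using matrix_left_right_inverse by blast
  have WQ: "W ** Q = (\<chi> a j. l j * f j $ a)"
  proof -
    have "(W ** Q) $ a $ j = l j * f j $ a" for a j
    proof -
      have "(W ** Q) $ a $ j = (W *v f j) $ a"
        by (simp add: mm_entry Q_def matrix_vector_mult_def)
      thus ?thesis using l by simp
    qed
    thus ?thesis by (simp add: vec_eq_iff)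
  qed
  define D where "D = transpose Q ** (W ** Q)"
  have Dij: "D $ i $ j = (if i = j then l j else 0)" for i j
  proof -
    have "D $ i $ j = (\<Sum>a\<in>UNIV. f i $ a * (l j * f j $ a))"
      unfolding D_def WQ by (simp add: mm_entry Q_def transpose_def)
    also have "... = l j * (f i \<bullet> f j)"
      by (simp add: inner_vec_def sum_distrib_left algebra_simps)
    finally show ?thesis by (simp add: fij)
  qed
  have detD: "det D = (\<Prod>j\<in>UNIV. l j)"
    by (subst det_diagonal) (simp_all add: Dij)
  have "det (transpose Q ** Q) = 1" using QtQ by simp
  hence dQ: "det Q * det Q = 1" by (simp add: det_mul)
  have "det D = det Q * det W * det Q" unfolding D_def by (simp add: det_mul)
  hence detW: "det W = (\<Prod>j\<in>UNIV. l j)" using dQ detD by (simp add: algebra_simps)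
  have "trace D = trace ((W ** Q) ** transpose Q)" unfolding D_def by (rule trace_mul_sym)
  also have "... = trace W" by (simp add: QQt flip: matrix_mul_assoc)
  finally have trW: "trace W = (\<Sum>j\<in>UNIV. l j)" by (simp add: trace_def Dij)
  have lpos: "l j > 0" for j
  proof -
    have "f j \<noteq> 0" using fnorm[of j] by auto
    hence "f j \<bullet> (W *v f j) > 0" by (rule pd)
    thus ?thesis using fnorm[of j] l[of j] by simp
  qed
  have lnz: "l j \<noteq> 0" for j using lpos[of j] by simp
  show "det W > 0" unfolding detW by (rule prod_pos) (simp add: lpos)
  have "ln (det W) = (\<Sum>j\<in>UNIV. ln (l j))" unfolding detW
    by (rule ln_prod) (simp_all add: lnz)
  also have "... \<le> real CARD('n) * ln (trace W / real CARD('n))"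
    unfolding trW by (rule ln_sum_le) (rule lpos)
  finally show "ln (det W) \<le> real CARD('n) * ln (trace W / real CARD('n))" .
qed

lemma sum_mv: "(\<Sum>t\<in>S. (A t :: real^'n^'m)) *v x = (\<Sum>t\<in>S. A t *v x)"
proof -
  have "((\<Sum>t\<in>S. A t) *v x) $ r = (\<Sum>t\<in>S. A t *v x) $ r" for r
    by (simp add: matrix_vector_mult_def sum_component sum_distrib_right) (rule sum.swap)
  thus ?thesis by (simp add: vec_eq_iff)
qed

lemma gram_sum: "gramian T Z B = (\<Sum>t<T. (mpow Z t ** B) ** transpose (mpow Z t ** B))"
  unfolding gramian_def gram_term ..

lemma gram_sym: "transpose (gramian T Z B) = gramian T Z B"
proof -
  have "transpose (gramian T Z B) $ r $ c = gramian T Z B $ r $ c" for r c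
    unfolding gram_sum by (simp add: transpose_def sum_component mm_entry mult.commute)
  thus ?thesis by (simp add: vec_eq_iff)
qed

lemma unitv_inner: "unitv p \<bullet> (v::real^'n) = v$p"
proof -
  have "(\<Sum>i\<in>UNIV. (if i = p then 1 else 0) * v$i) = (\<Sum>i\<in>UNIV. if i = p then v$i else 0)"
    by (rule sum.cong) auto
  thus ?thesis unfolding unitv_def inner_vec_def by simp
qed

lemma mv_unitv: "((M::real^'n^'m) *v unitv q) = column q M"
proof -
  have "(\<Sum>j\<in>UNIV. M$i$j * (if j = q then 1 else 0)) = (\<Sum>j\<in>UNIV. if j = q then M$i$j else 0)" for i
    by (rule sum.cong) auto
  thus ?thesis unfolding unitv_def matrix_vector_mult_def column_def by (simp add: vec_eq_iff)
qed

lemma unitv_entry: "unitv p \<bullet> ((M::real^'n^'n) *v unitv q) = M$p$q"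
  by (simp add: unitv_inner mv_unitv column_def)

lemma quad_MMt: "x \<bullet> (((M::real^'k^'n) ** transpose M) *v x) = (transpose M *v x) \<bullet> (transpose M *v x)"
proof -
  have "x \<bullet> ((M ** transpose M) *v x) = x \<bullet> (M *v (transpose M *v x))"
    by (simp only: matrix_vector_mul_assoc)
  also have "... = (x v* M) \<bullet> (transpose M *v x)" by (rule dot_lmul_matrix[symmetric])
  also have "x v* M = transpose M *v x" by simp
  finally show ?thesis .
qed

lemma gram_quad: "x \<bullet> (gramian T Z B *v x) = (\<Sum>t<T. (transpose (mpow Z t ** B) *v x) \<bullet> (transpose (mpow Z t ** B) *v x))"
  unfolding gram_sum sum_mv inner_sum_right quad_MMt ..

lemma gram_pd:
  fixes Z :: "real^'n^'n" and B :: "real^'m^'n"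
  assumes ctrl: "controllable T Z B" and x: "x \<noteq> 0"
  shows "x \<bullet> (gramian T Z B *v x) > 0"
proof (rule ccontr)
  assume "\<not> ?thesis"
  hence le: "(\<Sum>t<T. (transpose (mpow Z t ** B) *v x) \<bullet> (transpose (mpow Z t ** B) *v x)) \<le> 0"
    unfolding gram_quad by simp
  have z: "transpose (mpow Z t ** B) *v x = 0" if "t < T" for t
  proof -
    have "(\<Sum>t<T. (transpose (mpow Z t ** B) *v x) \<bullet> (transpose (mpow Z t ** B) *v x)) = 0"
      using le by (simp add: antisym sum_nonneg)
    hence "\<forall>t\<in>{..<T}. (transpose (mpow Z t ** B) *v x) \<bullet> (transpose (mpow Z t ** B) *v x) = 0"
      by (subst (asm) sum_nonneg_eq_0_iff) auto
    thus ?thesis using that by simp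
  qed
  have orth: "orthogonal x y" if yin: "y \<in> {column k (mpow Z t ** B) | t k. t < T}" for y
  proof -
    obtain t k where tk: "y = column k (mpow Z t ** B)" "t < T" using yin by blast
    have "(transpose (mpow Z t ** B) *v x) $ k = y \<bullet> x"
      unfolding tk by (simp add: matrix_vector_mult_def transpose_def column_def inner_vec_def mult.commute)
    thus ?thesis using z[OF tk(2)] by (simp add: orthogonal_def inner_commute)
  qed
  have "orthogonal x x"
  proof (rule orthogonal_to_span[OF _ orth])
    show "x \<in> span {column k (mpow Z t ** B) | t k. t < T}"
      using ctrl unfolding controllable_def by (metis UNIV_I)
  qed
  thus False using x by (simp add: orthogonal_def)
qed

lemma gram_ln:
  fixes Z :: "real^'n^'n" and B :: "real^'m^'n"
  assumes ctrl: "controllable T Z B"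
  shows "det (gramian T Z B) > 0" "trace (gramian T Z B) > 0"
    "ln (det (gramian T Z B)) \<le> real CARD('n) * ln (trace (gramian T Z B) / real CARD('n))"
proof -
  show "det (gramian T Z B) > 0" "ln (det (gramian T Z B)) \<le> real CARD('n) * ln (trace (gramian T Z B) / real CARD('n))"
    using det_trace_ln[OF gram_sym gram_pd[OF ctrl]] by auto
  have "gramian T Z B $ k $ k > 0" for k
  proof -
    have "unitv k \<noteq> (0::real^'n)" by (simp add: unitv_def vec_eq_iff)
    from gram_pd[OF ctrl this] show ?thesis by (simp add: unitv_entry)
  qed
  thus "trace (gramian T Z B) > 0" unfolding trace_def by (intro sum_pos) auto
qed

lemma rank1_bound:
  fixes u x v :: "real^'n"
  assumes u: "norm u = 1"
  shows "2 * (u \<bullet> v) * (x \<bullet> v) \<le> (u \<bullet> x + norm x) * (v \<bullet> v)"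
proof (cases "x = 0")
  case True thus ?thesis by simp
next
  case False
  define nx where "nx = norm x"
  have nx0: "nx > 0" using False unfolding nx_def by simp
  have uu: "u \<bullet> u = 1" using u by (simp add: norm_eq_1)
  have xx: "x \<bullet> x = nx\<^sup>2" unfolding nx_def by (simp add: power2_norm_eq_inner)
  define y where "y = nx *\<^sub>R u + x"
  define z where "z = nx *\<^sub>R u - x"
  have yv: "y \<bullet> v = nx * (u \<bullet> v) + x \<bullet> v" unfolding y_def by (simp add: inner_add_left)
  have zv: "z \<bullet> v = nx * (u \<bullet> v) - x \<bullet> v" unfolding z_def by (simp add: inner_diff_left)
  have yy: "y \<bullet> y = 2 * nx * (nx + u \<bullet> x)"
    unfolding y_def using uu xx by (simp add: inner_add_left inner_add_right inner_commute power2_eq_square algebra_simps)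
  have "4 * nx * ((u \<bullet> v) * (x \<bullet> v)) = (y \<bullet> v)\<^sup>2 - (z \<bullet> v)\<^sup>2"
    unfolding yv zv by (simp add: power2_eq_square algebra_simps)
  also have "... \<le> (y \<bullet> v)\<^sup>2" by simp
  also have "... \<le> (y \<bullet> y) * (v \<bullet> v)" by (rule Cauchy_Schwarz_ineq)
  also have "... = 2 * nx * ((nx + u \<bullet> x) * (v \<bullet> v))" unfolding yy by simp
  finally have "2 * nx * (2 * ((u \<bullet> v) * (x \<bullet> v))) \<le> 2 * nx * ((nx + u \<bullet> x) * (v \<bullet> v))"
    by (simp add: algebra_simps)
  hence "2 * ((u \<bullet> v) * (x \<bullet> v)) \<le> (nx + u \<bullet> x) * (v \<bullet> v)"
    using nx0 by (simp add: mult_le_cancel_left_pos mult.commute)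
  thus ?thesis unfolding nx_def by (simp add: algebra_simps)
qed

lemma Max_pair_ge:
  fixes f :: "'n::finite \<Rightarrow> 'n \<Rightarrow> real"
  assumes "p \<noteq> q"
  shows "f p q \<le> Max {f p q | p q. p \<noteq> q}"
proof (rule Max_ge)
  have "{f p q | p q. p \<noteq> q} \<subseteq> (\<lambda>(p,q). f p q) ` UNIV" by auto
  thus "finite {f p q | p q. p \<noteq> q}" by (rule finite_subset) simp
  show "f p q \<in> {f p q | p q. p \<noteq> q}" using assms by blast
qed

lemma Max_one_ge:
  fixes g :: "'n::finite \<Rightarrow> real"
  shows "g k \<le> Max {g k | k. True}"
proof (rule Max_ge)
  have "{g k | k. True} = range g" by auto
  thus "finite {g k | k. True}" by simp
  show "g k \<in> {g k | k. True}" by blast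
qed

lemma E_mult: "(Eji j i ** (M::real^'k^'n)) $ a $ b = (if a = j then M $ i $ b else 0)"
proof -
  have "(\<Sum>k\<in>UNIV. (if a = j \<and> k = i then 1 else 0) * M$k$b) = (\<Sum>k\<in>UNIV. if k = i then (if a = j then M$k$b else 0) else 0)"
    by (rule sum.cong) auto
  thus ?thesis unfolding mm_entry Eji_def by simp
qed

lemma tau_bound:
  fixes A :: "real^'n^'n" and B :: "real^'m^'n" and i j :: 'n and w :: real
  assumes hA: "spectral_radius (mabs A) < 1" and hij: "i \<noteq> j"
    and hw: "spectral_radius (mabs A + \<bar>w\<bar> *\<^sub>R Eji j i) < 1"
  shows "trace (matrix_inv (mat 1 - (mabs A + \<bar>w\<bar> *\<^sub>R Eji j i)) ** mabs B ** transpose (mabs B)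
            ** transpose (matrix_inv (mat 1 - (mabs A + \<bar>w\<bar> *\<^sub>R Eji j i))))
      \<le> (1 + alpha A w * beta A) * trace (Hmat A B) + (alpha A w)\<^sup>2 * gamma A * gamma_bar A B"
proof -
  define N where "N = mabs A"
  define E :: "real^'n^'n" where "E = Eji j i"
  define P where "P = N + \<bar>w\<bar> *\<^sub>R E"
  define X where "X = Xmat A"
  define X' where "X' = matrix_inv (mat 1 - P)"
  define bB where "bB = mabs B"
  have XN: "X = matrix_inv (mat 1 - N)" unfolding X_def N_def Xmat_def ..
  have nnN: "N$r$c \<ge> 0" for r c unfolding N_def mabs_def by simp
  have nnE: "E$r$c \<ge> 0" for r c unfolding E_def Eji_def by simp
  have nnP: "P$r$c \<ge> 0" for r c unfolding P_def using nnN nnE by simp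
  have nnB: "bB$r$c \<ge> 0" for r c unfolding bB_def mabs_def by simp
  have rhoN: "spectral_radius N < 1" using hA unfolding N_def .
  have rhoP: "spectral_radius P < 1" using hw unfolding P_def N_def E_def .
  have invN: "invertible (mat 1 - N)" using mmatrix(1)[OF nnN rhoN] .
  have invP: "invertible (mat 1 - P)" using mmatrix(1)[OF nnP rhoP] .
  have Xnn: "X$r$c \<ge> 0" for r c unfolding XN by (rule mmatrix(2)[OF nnN rhoN])
  have X'nn: "X'$r$c \<ge> 0" for r c unfolding X'_def by (rule mmatrix(2)[OF nnP rhoP])
  have NX: "(mat 1 - N) ** X = mat 1" unfolding XN by (rule inv_props(1)[OF invN])
  have X'P: "X' ** (mat 1 - P) = mat 1" unfolding X'_def by (rule inv_props(2)[OF invP])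
  have Xjj: "X$j$j \<ge> 1"
  proof -
    have "X = mat 1 + N ** X" using NX by (simp add: mm_diff_r algebra_simps)
    hence "X$j$j = (mat 1 + N ** X)$j$j" by (rule arg_cong)
    also have "... = 1 + (N ** X)$j$j" by (simp add: mat_def)
    finally have "X$j$j = 1 + (N ** X)$j$j" .
    moreover have "(N ** X)$j$j \<ge> 0" unfolding mm_entry by (intro sum_nonneg mult_nonneg_nonneg nnN Xnn)
    ultimately show ?thesis by simp
  qed
  define \<delta> where "\<delta> = 1 - \<bar>w\<bar> * X$i$j"
  have PX: "(mat 1 - P) ** X = mat 1 - \<bar>w\<bar> *\<^sub>R (E ** X)"
  proof -
    have eq: "mat 1 - P = (mat 1 - N) - \<bar>w\<bar> *\<^sub>R E" unfolding P_def by (simp add: algebra_simps)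
    show ?thesis unfolding eq by (subst mm_diff_r, subst mm_scale_l, subst NX, rule refl)
  qed
  have PXe: "((mat 1 - P) ** X)$a$b = (if a = b then 1 else 0) - \<bar>w\<bar> * (if a = j then X$i$b else 0)" for a b
    unfolding PX E_def by (simp add: E_mult mat_def)
  have PXj: "((mat 1 - P) ** X)$a$j = (if a = j then \<delta> else 0)" for a
    unfolding PXe \<delta>_def using hij by auto
  have \<delta>pos: "\<delta> > 0"
  proof (rule ccontr)
    assume "\<not> \<delta> > 0"
    have "X = X' ** ((mat 1 - P) ** X)" using X'P by (simp add: matrix_mul_assoc)
    hence "X$j$j = (\<Sum>k\<in>UNIV. X'$j$k * ((mat 1 - P) ** X)$k$j)" by (metis mm_entry)
    also have "... = (\<Sum>k\<in>UNIV. if k = j then X'$j$k * \<delta> else 0)" by (rule sum.cong) (auto simp: PXj)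
    also have "... = X'$j$j * \<delta>" by simp
    also have "... \<le> 0" using X'nn[of j j] \<open>\<not> \<delta> > 0\<close> by (simp add: mult_nonneg_nonpos)
    finally show False using Xjj by simp
  qed
  define \<alpha>0 where "\<alpha>0 = \<bar>w\<bar> / \<delta>"
  have a0d: "\<alpha>0 * \<delta> = \<bar>w\<bar>" unfolding \<alpha>0_def using \<delta>pos by simp
  have a0nn: "\<alpha>0 \<ge> 0" unfolding \<alpha>0_def using \<delta>pos by simp
  define K :: "real^'n^'n" where "K = (\<chi> a b. X$a$j * X$i$b)"
  have X'eq: "X' = X + \<alpha>0 *\<^sub>R K"
  proof -
    have "(mat 1 - P) ** (X + \<alpha>0 *\<^sub>R K) = mat 1"
    proof -
      have PK: "((mat 1 - P) ** K)$a$b = (if a = j then \<delta> else 0) * X$i$b" for a b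
      proof -
        have "((mat 1 - P) ** K)$a$b = (\<Sum>k\<in>UNIV. (mat 1 - P)$a$k * X$k$j) * X$i$b"
          unfolding mm_entry K_def by (simp add: sum_distrib_right mult.assoc)
        also have "... = ((mat 1 - P) ** X)$a$j * X$i$b" by (simp add: mm_entry)
        finally show ?thesis unfolding PXj .
      qed
      have "((mat 1 - P) ** (X + \<alpha>0 *\<^sub>R K))$a$b = (mat 1 :: real^'n^'n)$a$b" for a b
      proof -
        have "((mat 1 - P) ** (X + \<alpha>0 *\<^sub>R K))$a$b = ((mat 1 - P) ** X)$a$b + \<alpha>0 * ((mat 1 - P) ** K)$a$b"
          by (simp add: matrix_add_ldistrib mm_scale_r)
        also have "... = (mat 1 :: real^'n^'n)$a$b"
          unfolding PXe PK using a0d by (auto simp: mat_def algebra_simps)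
        finally show ?thesis .
      qed
      thus ?thesis by (simp add: vec_eq_iff)
    qed
    thus ?thesis unfolding X'_def by (rule inv_unique)
  qed
  define M where "M = X ** bB"
  define x where "x = column j X"
  have M'eq: "(X' ** bB)$a$c = M$a$c + \<alpha>0 * M$i$c * x$a" for a c
  proof -
    have "(K ** bB)$a$c = X$a$j * M$i$c"
      unfolding mm_entry K_def M_def by (simp add: sum_distrib_left mult.assoc)
    thus ?thesis unfolding X'eq M_def x_def
      by (simp add: mm_add_r mm_scale_l column_def)
  qed
  have trH': "trace (X' ** bB ** transpose bB ** transpose X') = (\<Sum>c\<in>UNIV. (column c M + (\<alpha>0 * M$i$c) *\<^sub>R x) \<bullet> (column c M + (\<alpha>0 * M$i$c) *\<^sub>R x))"
  proof -
    have "trace (X' ** bB ** transpose bB ** transpose X') = trace ((X' ** bB) ** transpose (X' ** bB))"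
      by (simp add: matrix_transpose_mul matrix_mul_assoc)
    also have "... = (\<Sum>a\<in>UNIV. \<Sum>c\<in>UNIV. ((X' ** bB)$a$c)\<^sup>2)" by (rule trace_MMt)
    also have "... = (\<Sum>c\<in>UNIV. \<Sum>a\<in>UNIV. ((X' ** bB)$a$c)\<^sup>2)" by (rule sum.swap)
    also have "... = (\<Sum>c\<in>UNIV. (column c M + (\<alpha>0 * M$i$c) *\<^sub>R x) \<bullet> (column c M + (\<alpha>0 * M$i$c) *\<^sub>R x))"
      by (rule sum.cong[OF refl]) (simp add: inner_vec_def M'eq column_def power2_eq_square)
    finally show ?thesis .
  qed
  define H where "H = Hmat A B"
  have HM: "H = M ** transpose M" unfolding H_def Hmat_def M_def X_def bB_def
    by (simp add: matrix_transpose_mul matrix_mul_assoc)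
  have trH: "trace H = (\<Sum>c\<in>UNIV. column c M \<bullet> column c M)"
  proof -
    have "trace H = (\<Sum>a\<in>UNIV. \<Sum>c\<in>UNIV. (M$a$c)\<^sup>2)" unfolding HM by (rule trace_MMt)
    also have "... = (\<Sum>c\<in>UNIV. \<Sum>a\<in>UNIV. (M$a$c)\<^sup>2)" by (rule sum.swap)
    also have "... = (\<Sum>c\<in>UNIV. column c M \<bullet> column c M)"
      by (rule sum.cong[OF refl]) (simp add: inner_vec_def column_def power2_eq_square)
    finally show ?thesis .
  qed
  have trH0: "trace H \<ge> 0" unfolding trH by (intro sum_nonneg) simp
  have Hii: "H$i$i = (\<Sum>c\<in>UNIV. (M$i$c)\<^sup>2)" unfolding HM by (simp add: mm_entry transpose_def power2_eq_square)
  have ui: "unitv i \<bullet> column c M = M$i$c" for c by (simp add: unitv_inner column_def)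
  have uix: "unitv i \<bullet> x = X$i$j" by (simp add: unitv_inner x_def column_def)
  have nui: "norm (unitv i :: real^'n) = 1"
  proof -
    have "unitv i \<bullet> (unitv i :: real^'n) = 1" by (simp only: unitv_inner) (simp add: unitv_def)
    thus ?thesis by (simp add: norm_eq_1)
  qed
  define b where "b = X$i$j + norm x"
  have b0: "b \<ge> 0" unfolding b_def using Xnn by simp
  have percol: "(column c M + (\<alpha>0 * M$i$c) *\<^sub>R x) \<bullet> (column c M + (\<alpha>0 * M$i$c) *\<^sub>R x)
      \<le> (1 + \<alpha>0 * b) * (column c M \<bullet> column c M) + \<alpha>0\<^sup>2 * (x \<bullet> x) * (M$i$c)\<^sup>2" for c
  proof -
    let ?v = "column c M"
    have "(?v + (\<alpha>0 * M$i$c) *\<^sub>R x) \<bullet> (?v + (\<alpha>0 * M$i$c) *\<^sub>R x)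
        = ?v \<bullet> ?v + \<alpha>0 * (2 * M$i$c * (x \<bullet> ?v)) + \<alpha>0\<^sup>2 * (x \<bullet> x) * (M$i$c)\<^sup>2"
      by (simp add: inner_add_left inner_add_right inner_commute power2_eq_square algebra_simps)
    also have "2 * M$i$c * (x \<bullet> ?v) \<le> b * (?v \<bullet> ?v)"
      using rank1_bound[OF nui, where x=x and v="column c M"] unfolding ui uix b_def by (simp add: algebra_simps)
    hence "\<alpha>0 * (2 * M$i$c * (x \<bullet> ?v)) \<le> \<alpha>0 * (b * (?v \<bullet> ?v))" using a0nn by (simp add: mult_left_mono)
    finally show ?thesis by (simp add: algebra_simps)
  qed
  have "trace (X' ** bB ** transpose bB ** transpose X')
      \<le> (\<Sum>c\<in>UNIV. (1 + \<alpha>0 * b) * (column c M \<bullet> column c M) + \<alpha>0\<^sup>2 * (x \<bullet> x) * (M$i$c)\<^sup>2)"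
    unfolding trH' by (rule sum_mono) (rule percol)
  also have "... = (1 + \<alpha>0 * b) * trace H + \<alpha>0\<^sup>2 * (x \<bullet> x) * H$i$i"
    unfolding trH Hii by (simp add: sum.distrib sum_distrib_left)
  finally have main: "trace (X' ** bB ** transpose bB ** transpose X') \<le> (1 + \<alpha>0 * b) * trace H + \<alpha>0\<^sup>2 * (x \<bullet> x) * H$i$i" .
  have a0_le: "\<alpha>0 \<le> alpha A w"
  proof -
    have "\<alpha>0 = alpha_pq A w i j" unfolding alpha_pq_def \<alpha>0_def \<delta>_def X_def by (simp add: unitv_entry)
    also have "... \<le> alpha A w" unfolding alpha_def by (rule Max_pair_ge[OF hij])
    finally show ?thesis .
  qed
  have b_le: "b \<le> beta A"
  proof -
    have "X$i$j \<le> Max {unitv p \<bullet> (Xmat A *v unitv q) | p q. p \<noteq> q}"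
      using Max_pair_ge[OF hij, of "\<lambda>p q. unitv p \<bullet> (Xmat A *v unitv q)"] unfolding X_def by (simp add: unitv_entry)
    moreover have "norm x \<le> Max {norm (Xmat A *v unitv q) | q. True}"
      using Max_one_ge[of "\<lambda>q. norm (Xmat A *v unitv q)" j] unfolding x_def X_def by (simp add: mv_unitv)
    ultimately show ?thesis unfolding b_def beta_def by linarith
  qed
  have g_le: "x \<bullet> x \<le> gamma A"
  proof -
    have "x \<bullet> x = unitv j \<bullet> ((transpose X ** X) *v unitv j)"
      unfolding unitv_entry x_def by (simp add: mm_entry transpose_def inner_vec_def column_def)
    also have "... \<le> gamma A" unfolding gamma_def X_def by (rule Max_one_ge)
    finally show ?thesis .
  qed
  have gb_le: "H$i$i \<le> gamma_bar A B"
  proof -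
    have "H$i$i = unitv i \<bullet> (Hmat A B *v unitv i)" unfolding unitv_entry H_def ..
    also have "... \<le> gamma_bar A B" unfolding gamma_bar_def by (rule Max_one_ge)
    finally show ?thesis .
  qed
  have xx0: "x \<bullet> x \<ge> 0" by simp
  have Hii0: "H$i$i \<ge> 0" unfolding Hii by (intro sum_nonneg) simp
  have "(1 + \<alpha>0 * b) * trace H \<le> (1 + alpha A w * beta A) * trace H"
  proof (rule mult_right_mono[OF _ trH0])
    have "\<alpha>0 * b \<le> alpha A w * beta A" using a0_le b_le a0nn b0 by (intro mult_mono) auto
    thus "1 + \<alpha>0 * b \<le> 1 + alpha A w * beta A" by simp
  qed
  moreover have "\<alpha>0\<^sup>2 * (x \<bullet> x) * H$i$i \<le> (alpha A w)\<^sup>2 * gamma A * gamma_bar A B"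
  proof -
    have "\<alpha>0\<^sup>2 \<le> (alpha A w)\<^sup>2" using a0_le a0nn by (intro power_mono) auto
    hence f1: "\<alpha>0\<^sup>2 * (x \<bullet> x) \<le> (alpha A w)\<^sup>2 * gamma A"
      using g_le xx0 by (intro mult_mono) auto
    have f2: "0 \<le> (alpha A w)\<^sup>2 * gamma A" using order_trans[OF xx0 g_le] by simp
    show ?thesis by (rule mult_mono[OF f1 gb_le f2 Hii0])
  qed
  ultimately have "trace (X' ** bB ** transpose bB ** transpose X') \<le> (1 + alpha A w * beta A) * trace H + (alpha A w)\<^sup>2 * gamma A * gamma_bar A B"
    using main by linarith
  thus ?thesis unfolding X'_def P_def N_def E_def bB_def H_def .
qed

lemma sigma_step:
  fixes x n :: real
  assumes x: "0 < x" and n: "1 \<le> n"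
  shows "n * ln (x / n) \<le> sigma x * n * ln (x / n powr (1 / sigma x))"
proof (cases "x \<le> 1")
  case True
  thus ?thesis using n by (simp add: sigma_def)
next
  case False
  have n0: "n > 0" using n by simp
  have e1: "ln (x / n powr (1/2)) = ln x - (1/2) * ln n"
    using x n0 by (simp add: ln_div ln_powr)
  have e2: "ln (x / n) = ln x - ln n" using x n0 by (simp add: ln_div)
  have lx: "ln x \<ge> 0" using False by simp
  have "ln (x / n) \<le> 2 * ln (x / n powr (1/2))" using e1 e2 lx by linarith
  hence "n * ln (x / n) \<le> n * (2 * ln (x / n powr (1/2)))" using n0 by (simp add: mult_left_mono)
  thus ?thesis using False by (simp add: sigma_def algebra_simps)
qed

lemma ln_mono_step:
  fixes x y c s n :: real
  assumes "0 < x" "x \<le> y" "0 < c" "0 \<le> s" "0 \<le> n"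
  shows "s * n * ln (x / c) \<le> s * n * ln (y / c)"
proof -
  have "ln (x / c) \<le> ln (y / c)" using assms by (simp add: divide_right_mono)
  thus ?thesis using assms by (simp add: mult_left_mono)
qed

lemma sigma_nonneg: "0 \<le> sigma x" by (simp add: sigma_def)

theorem theorem5p3:
  fixes A :: "real^'n^'n" and B :: "real^'m^'n" and T :: nat
    and i j :: 'n and w :: real
  assumes hA: "spectral_radius (mabs A) < 1"
    and hT: "T > 0"
    and hij: "i \<noteq> j"
    and hw: "spectral_radius (mabs A + \<bar>w\<bar> *\<^sub>R Eji j i) < 1"
    and hcA: "controllable T A B"
    and hcAw: "controllable T (A + w *\<^sub>R Eji j i) B"
  shows
    "ln (det (gramian T A B))
       \<le> sigma (trace (gramian T A B)) * real CARD('n)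
          * ln (trace (gramian T A B) / real CARD('n) powr (1 / sigma (trace (gramian T A B))))
     \<and> sigma (trace (gramian T A B)) * real CARD('n)
          * ln (trace (gramian T A B) / real CARD('n) powr (1 / sigma (trace (gramian T A B))))
       \<le> sigma (trace (gramian T A B)) * real CARD('n)
          * ln (trace (Hmat A B) / real CARD('n) powr (1 / sigma (trace (gramian T A B))))
     \<and> (let \<tau> = (1 + alpha A w * beta A) * trace (Hmat A B) + (alpha A w)\<^sup>2 * gamma A * gamma_bar A B
        in ln (det (gramian T (A + w *\<^sub>R Eji j i) B))
             \<le> sigma \<tau> * real CARD('n) * ln (\<tau> / real CARD('n) powr (1 / sigma \<tau>)))"
proof -
  define n where "n = real CARD('n)"
  have n1: "1 \<le> n" unfolding n_def by simp
  define tW where "tW = trace (gramian T A B)"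
  define tH where "tH = trace (Hmat A B)"
  define \<tau> where "\<tau> = (1 + alpha A w * beta A) * trace (Hmat A B) + (alpha A w)\<^sup>2 * gamma A * gamma_bar A B"
  define A' where "A' = A + w *\<^sub>R Eji j i"
  define tW' where "tW' = trace (gramian T A' B)"
  note g1 = gram_ln[OF hcA, folded tW_def n_def]
  note g2 = gram_ln[OF hcAw, folded A'_def tW'_def n_def]
  have tWH: "tW \<le> tH"
  proof -
    have "tW \<le> trace (matrix_inv (mat 1 - mabs A) ** mabs B ** transpose (mabs B) ** transpose (matrix_inv (mat 1 - mabs A)))"
      unfolding tW_def by (rule trace_gram_le[OF _ hA]) (simp add: mabs_def)
    thus ?thesis unfolding tH_def Hmat_def Xmat_def .
  qed
  have tW'tau: "tW' \<le> \<tau>"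
  proof -
    have le: "\<bar>A'$r$c\<bar> \<le> (mabs A + \<bar>w\<bar> *\<^sub>R Eji j i)$r$c" for r c
      unfolding A'_def by (simp add: mabs_def Eji_def abs_mult abs_triangle_ineq)
    have "tW' \<le> trace (matrix_inv (mat 1 - (mabs A + \<bar>w\<bar> *\<^sub>R Eji j i)) ** mabs B ** transpose (mabs B)
            ** transpose (matrix_inv (mat 1 - (mabs A + \<bar>w\<bar> *\<^sub>R Eji j i))))"
      unfolding tW'_def by (rule trace_gram_le[OF le hw])
    also have "... \<le> \<tau>" unfolding \<tau>_def by (rule tau_bound[OF hA hij hw])
    finally show ?thesis .
  qed
  have P1: "ln (det (gramian T A B)) \<le> sigma tW * n * ln (tW / n powr (1 / sigma tW))"
    using g1(3) sigma_step[OF g1(2) n1] by linarith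
  have P2: "sigma tW * n * ln (tW / n powr (1 / sigma tW)) \<le> sigma tW * n * ln (tH / n powr (1 / sigma tW))"
    by (rule ln_mono_step[OF g1(2) tWH]) (use n1 in \<open>simp_all add: sigma_nonneg\<close>)
  have tau0: "\<tau> > 0" using g2(2) tW'tau by simp
  have "n * ln (tW' / n) \<le> n * ln (\<tau> / n)"
    using ln_mono_step[OF g2(2) tW'tau, of n 1 n] n1 by simp
  hence P3: "ln (det (gramian T A' B)) \<le> sigma \<tau> * n * ln (\<tau> / n powr (1 / sigma \<tau>))"
    using g2(3) sigma_step[OF tau0 n1] by linarith
  show ?thesis
    using P1 P2 P3 unfolding tW_def tH_def n_def A'_def \<tau>_def Let_def by blast
qed

end
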